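(* Let $m\ge 3$, $H=B(l_1,\ldots,l_m)$ and $G=H^2$. Then $G$ is equitably $k$-choosable for every $k\ge m+3$.
   Context: All graphs are finite and simple. For $m,l_1,\ldots,l_m\in\mathbb{N}$ with $l_1\le\cdots\le l_m$, $B(l_1,\ldots,l_m)$ is the graph with vertex set $\{u\}\cup\{v_{i,j}: i\in[m], j\in[l_i]\}$ in which, for each $i\in[m]$, consecutive vertices in the sequence $u, v_{i,1},\ldots,v_{i,l_i}$ are adjacent (and there are no other edges). For a graph $H$, $H^2$ has vertex set $V(H)$ with two vertices adjacent iff their distance in $H$ is 1 or 2. A $k$-assignment $L$ assigns to each vertex a set of exactly $k$ colors; an equitable $L$-coloring of $G$ is a proper coloring $f$ with $f(v)\in L(v)$ such that no color is used more than $\lceil |V(G)|/k\rceil$ times; $G$ is equitably $k$-choosable if it has an equitable $L$-coloring for every $k$-assignment $L$. *)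

theory Defs
  imports Complex_Main
begin

text \<open>Spider B(l_1,...,l_m): centre u = (0,0); v_{i,j} = (i,j) for 1 <= i <= m, 1 <= j <= l i.\<close>
definition spider_V :: "nat \<Rightarrow> (nat \<Rightarrow> nat) \<Rightarrow> (nat \<times> nat) set" where
  "spider_V m l = {(0,0)} \<union> {(i,j). 1 \<le> i \<and> i \<le> m \<and> 1 \<le> j \<and> j \<le> l i}"

definition spider_E :: "nat \<Rightarrow> (nat \<Rightarrow> nat) \<Rightarrow> (nat \<times> nat) \<Rightarrow> (nat \<times> nat) \<Rightarrow> bool" where
  "spider_E m l x y \<longleftrightarrow> x \<in> spider_V m l \<and> y \<in> spider_V m l \<and>
     ((x = (0,0) \<and> fst y \<ge> 1 \<and> snd y = 1) \<or>
      (y = (0,0) \<and> fst x \<ge> 1 \<and> snd x = 1) \<or>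
      (fst x \<ge> 1 \<and> fst x = fst y \<and> (snd y = snd x + 1 \<or> snd x = snd y + 1)))"

definition graph_square :: "'v set \<Rightarrow> ('v \<Rightarrow> 'v \<Rightarrow> bool) \<Rightarrow> 'v \<Rightarrow> 'v \<Rightarrow> bool" where
  "graph_square V E x y \<longleftrightarrow> x \<in> V \<and> y \<in> V \<and> x \<noteq> y \<and>
     (E x y \<or> (\<exists>z\<in>V. E x z \<and> E z y))"

definition k_assignment :: "'v set \<Rightarrow> nat \<Rightarrow> ('v \<Rightarrow> 'c set) \<Rightarrow> bool" where
  "k_assignment V k L \<longleftrightarrow> (\<forall>v\<in>V. finite (L v) \<and> card (L v) = k)"

definition equitable_L_coloring ::
    "'v set \<Rightarrow> ('v \<Rightarrow> 'v \<Rightarrow> bool) \<Rightarrow> nat \<Rightarrow> ('v \<Rightarrow> 'c set) \<Rightarrow> ('v \<Rightarrow> 'c) \<Rightarrow> bool" where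
  "equitable_L_coloring V E k L f \<longleftrightarrow>
     (\<forall>v\<in>V. f v \<in> L v) \<and>
     (\<forall>x\<in>V. \<forall>y\<in>V. E x y \<longrightarrow> f x \<noteq> f y) \<and>
     (\<forall>c. real (card {v\<in>V. f v = c}) \<le> of_int \<lceil>real (card V) / real k\<rceil>)"

text \<open>Colours are taken from an arbitrary type 'c (universally quantified).\<close>
definition equitably_choosable :: "'v set \<Rightarrow> ('v \<Rightarrow> 'v \<Rightarrow> bool) \<Rightarrow> nat \<Rightarrow> 'c itself \<Rightarrow> bool" where
  "equitably_choosable V E k (_::'c itself) \<longleftrightarrow>
     (\<forall>L :: 'v \<Rightarrow> 'c set. k_assignment V k L \<longrightarrow> (\<exists>f. equitable_L_coloring V E k L f))"

end

theory Submission imports Defs begin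

definition good :: "('v\<Rightarrow>'v\<Rightarrow>bool) \<Rightarrow> ('v \<Rightarrow> 'c set) \<Rightarrow> nat \<Rightarrow> 'v set \<Rightarrow> ('v \<Rightarrow> 'c) \<Rightarrow> bool" where
"good G L k W f \<longleftrightarrow> (\<forall>v\<in>W. f v \<in> L v) \<and> (\<forall>x\<in>W. \<forall>y\<in>W. G x y \<longrightarrow> f x \<noteq> f y)
   \<and> (\<forall>c. card {v\<in>W. f v = c} * k < card W + k)"

lemma greedy_aux:
  assumes "finite A"
  shows "finite T \<Longrightarrow> card T = n \<Longrightarrow> (\<forall>x\<in>T. finite (L x) \<and> card (L x) = k) \<Longrightarrow>
   (\<forall>x\<in>T. card {y\<in>T. card {z\<in>A. G x z} \<le> card {z\<in>A. G y z}} + card {z\<in>A. G x z} \<le> k) \<Longrightarrow>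
   \<exists>g. (\<forall>x\<in>T. g x \<in> L x) \<and> inj_on g T \<and> (\<forall>x\<in>T. \<forall>z\<in>A. G x z \<longrightarrow> g x \<noteq> f z)"
proof (induction n arbitrary: T)
  case 0
  then show ?case by auto
next
  case (Suc n)
  define d where "d = (\<lambda>x. card {z\<in>A. G x z})"
  have Tne: "T \<noteq> {}" using Suc.prems(2) by auto
  have "Min (d ` T) \<in> d ` T" using Tne Suc.prems(1) by (intro Min_in) auto
  then obtain x where xT: "x \<in> T" and xmin: "d x = Min (d ` T)" by auto
  have xle: "\<forall>y\<in>T. d x \<le> d y" using xmin Suc.prems(1) by simp
  define T' where "T' = T - {x}"
  have cT': "card T' = n" using Suc.prems(2) xT T'_def by simp
  have fT': "finite T'" using Suc.prems(1) T'_def by simp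
  have condT': "\<forall>y\<in>T'. card {w\<in>T'. d y \<le> d w} + d y \<le> k"
  proof
    fix y assume y: "y \<in> T'"
    have "card {w\<in>T'. d y \<le> d w} \<le> card {w\<in>T. d y \<le> d w}"
      by (rule card_mono) (use Suc.prems(1) T'_def in auto)
    then show "card {w\<in>T'. d y \<le> d w} + d y \<le> k" using Suc.prems(4) y T'_def d_def by fastforce
  qed
  obtain g where g1: "\<forall>y\<in>T'. g y \<in> L y" and g2: "inj_on g T'"
     and g3: "\<forall>y\<in>T'. \<forall>z\<in>A. G y z \<longrightarrow> g y \<noteq> f z"
    using Suc.IH[OF fT' cT'] Suc.prems(3) condT' T'_def d_def by auto
  have "{w\<in>T. d x \<le> d w} = T" using xle by auto
  then have ck: "card T + d x \<le> k" using Suc.prems(4) xT d_def by fastforce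
  define F where "F = g ` T' \<union> f ` {z\<in>A. G x z}"
  have "card F \<le> card (g ` T') + card (f ` {z\<in>A. G x z})" unfolding F_def by (rule card_Un_le)
  also have "\<dots> \<le> card T' + d x" unfolding d_def
    by (intro add_mono card_image_le) (use fT' assms in auto)
  finally have cF: "card F < k" using ck cT' Suc.prems(2) by simp
  have "\<not> L x \<subseteq> F"
  proof
    assume "L x \<subseteq> F"
    then have "card (L x) \<le> card F" by (rule card_mono[rotated]) (simp add: F_def fT' assms)
    then show False using cF Suc.prems(3) xT by auto
  qed
  then obtain c where c1: "c \<in> L x" and c2: "c \<notin> F" by auto
  have Tins: "T = insert x T'" using xT T'_def by auto
  have xT': "x \<notin> T'" using T'_def by auto
  show ?case
  proof (intro exI[of _ "g(x := c)"] conjI ballI impI)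
    fix y assume "y \<in> T" then show "(g(x := c)) y \<in> L y" using g1 c1 Tins by auto
  next
    show "inj_on (g(x := c)) T" unfolding Tins using g2 c2 xT' F_def
      by (auto simp: inj_on_def)
  next
    fix y z assume "y \<in> T" "z \<in> A" "G y z"
    then show "(g(x := c)) y \<noteq> f z" using g3 c2 Tins F_def by auto
  qed
qed

lemma step:
  assumes fW: "finite W" and SW: "S \<subseteq> W" and gA: "good G L k (W - S) f" and k1: "k \<ge> 1"
    and cS: "card S = k \<or> W - S = {}"
    and lists: "\<forall>x\<in>S. finite (L x) \<and> card (L x) = k"
    and cond: "\<forall>x\<in>S. card {y\<in>S. card {z\<in>W-S. G x z} \<le> card {z\<in>W-S. G y z}} + card {z\<in>W-S. G x z} \<le> k"
    and sym: "\<And>x y. G x y \<Longrightarrow> G y x" and irr: "\<And>x. \<not> G x x"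
  shows "\<exists>f'. good G L k W f'"
proof -
  define A where "A = W - S"
  have fA: "finite A" using fW A_def by simp
  have fS: "finite S" using fW SW finite_subset by blast
  obtain g where g1: "\<forall>x\<in>S. g x \<in> L x" and g2: "inj_on g S"
     and g3: "\<forall>x\<in>S. \<forall>z\<in>A. G x z \<longrightarrow> g x \<noteq> f z"
    using greedy_aux[OF fA fS refl lists, of G f] cond A_def by auto
  define f' where "f' = (\<lambda>v. if v \<in> S then g v else f v)"
  have cW: "card W = card S + card A" unfolding A_def using fW SW
    by (metis card_Diff_subset fS le_add_diff_inverse card_mono)
  show ?thesis
  proof (intro exI[of _ f'])
    have p1: "\<forall>v\<in>W. f' v \<in> L v" using g1 gA unfolding good_def f'_def by auto
    have p2: "\<forall>x\<in>W. \<forall>y\<in>W. G x y \<longrightarrow> f' x \<noteq> f' y"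
    proof (intro ballI impI)
      fix x y assume x: "x \<in> W" and y: "y \<in> W" and G: "G x y"
      show "f' x \<noteq> f' y"
      proof (cases "x \<in> S"; cases "y \<in> S")
        assume "x \<in> S" "y \<in> S" then show ?thesis using g2 G irr f'_def by (auto simp: inj_on_def)
      next
        assume "x \<in> S" "y \<notin> S" then show ?thesis using g3 G y f'_def A_def by auto
      next
        assume "x \<notin> S" "y \<in> S" then show ?thesis using g3 sym[OF G] x f'_def A_def by force
      next
        assume "x \<notin> S" "y \<notin> S" then show ?thesis using gA G x y f'_def unfolding good_def by auto
      qed
    qed
    have p3: "\<forall>c. card {v\<in>W. f' v = c} * k < card W + k"
    proof
      fix c
      have e: "{v\<in>W. f' v = c} = {v\<in>A. f v = c} \<union> {v\<in>S. g v = c}" using SW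
        unfolding f'_def A_def by auto
      have c1: "card {v\<in>S. g v = c} \<le> 1"
      proof -
        have "card {v\<in>S. g v = c} \<le> card {c}"
          by (rule card_inj_on_le[of g]) (use g2 in \<open>auto intro: inj_on_subset\<close>)
        then show ?thesis by simp
      qed
      have "card {v\<in>W. f' v = c} \<le> card {v\<in>A. f v = c} + card {v\<in>S. g v = c}"
        unfolding e by (rule card_Un_le)
      then have le: "card {v\<in>W. f' v = c} \<le> card {v\<in>A. f v = c} + 1" using c1 by simp
      have gc: "card {v\<in>A. f v = c} * k < card A + k" using gA A_def unfolding good_def by auto
      show "card {v\<in>W. f' v = c} * k < card W + k"
      proof (cases "card S = k")
        case True
        have "card {v\<in>W. f' v = c} * k \<le> (card {v\<in>A. f v = c} + 1) * k" using le by (rule mult_right_mono) simp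
        then show ?thesis using gc cW True by simp
      next
        case False
        then have "A = {}" using cS A_def by auto
        then have le1: "card {v\<in>W. f' v = c} \<le> 1" using le by simp
        show ?thesis
        proof (cases "card {v\<in>W. f' v = c} = 0")
          case True then show ?thesis using k1 by simp
        next
          case False
          then have "{v\<in>W. f' v = c} \<noteq> {}" by (metis card.empty)
          then have "W \<noteq> {}" by blast
          then have "card W \<ge> 1" using fW by (simp add: Suc_le_eq card_gt_0_iff)
          moreover have "card {v\<in>W. f' v = c} = 1" using le1 False by simp
          ultimately show ?thesis by simp
        qed
      qed
    qed
    show "good G L k W f'" using p1 p2 p3 unfolding good_def by blast
  qed
qed

lemma base:
  assumes "finite W" "card W \<le> k" "k \<ge> 1" "\<forall>x\<in>W. finite (L x) \<and> card (L x) = k"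
    and sym: "\<And>x y. G x y \<Longrightarrow> G y x" and irr: "\<And>x. \<not> G x x"
  shows "\<exists>f. good G L k W f"
proof -
  have g0: "good G L k {} f" for f unfolding good_def using assms(3) by auto
  show ?thesis
    apply (rule step[of W W G L k undefined])
    using assms g0 by (auto intro: le_trans[OF card_mono])
qed


lemma spider_V_eq: "spider_V m h = insert (0,0) (SIGMA i:{1..m}. {1..h i})"
  by (auto simp: spider_V_def)

lemma card_spider_V: "card (spider_V m h) = Suc (\<Sum>i\<in>{1..m}. h i)"
  unfolding spider_V_eq by (subst card_insert_disjoint) (auto simp: card_SigmaI)

lemma finite_spider_V: "finite (spider_V m h)"
  unfolding spider_V_eq by auto

lemma spider_E_sym: "spider_E m l x y \<Longrightarrow> spider_E m l y x"
  unfolding spider_E_def by auto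

lemma gsq_sym: "graph_square V (spider_E m l) x y \<Longrightarrow> graph_square V (spider_E m l) y x"
  unfolding graph_square_def using spider_E_sym by blast

lemma nbr:
  assumes "graph_square (spider_V m l) (spider_E m l) (i,j) y" "1 \<le> i"
  shows "y \<in> spider_V m l \<and> (y = (i,j+1) \<or> y = (i,j+2) \<or> (2 \<le> j \<and> y = (i,j-1)) \<or> (3 \<le> j \<and> y = (i,j-2))
     \<or> (j \<le> 2 \<and> y = (0,0)) \<or> (j = 1 \<and> (\<exists>t. y = (t,1) \<and> 1 \<le> t \<and> t \<le> m)))"
proof -
  obtain a b where y: "y = (a,b)" by fastforce
  show ?thesis using assms unfolding y graph_square_def spider_E_def spider_V_def
    by auto
qed

lemma nA:
  assumes "graph_square (spider_V m l) (spider_E m l) (i,j) z" "z \<in> spider_V m h'" "1 \<le> i" "h' i < j"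
  shows "(j = h' i + 1 \<and> 2 \<le> j \<and> z = (i,j-1)) \<or> (3 \<le> j \<and> j \<le> h' i + 2 \<and> z = (i,j-2))
     \<or> (j \<le> 2 \<and> z = (0,0)) \<or> (j = 1 \<and> (\<exists>t. z = (t,1) \<and> 1 \<le> t \<and> t \<le> m \<and> 1 \<le> h' t))"
  using nbr[OF assms(1,3)] assms(2,4) by (auto simp: spider_V_def)

lemma cond_main:
  fixes h h' :: "nat \<Rightarrow> nat"
  assumes km: "k \<ge> m + 3" and cS: "card S = k"
    and memS: "\<And>x. x \<in> S \<longleftrightarrow> (\<exists>i j. x = (i,j) \<and> 1 \<le> i \<and> i \<le> m \<and> h' i < j \<and> j \<le> h i)"
    and i0: "i0 \<in> {1..m}" "h' i0 + 3 \<le> h i0"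
  shows "\<forall>x\<in>S. card {y\<in>S. card {z\<in>spider_V m h'. graph_square (spider_V m l) (spider_E m l) x z}
          \<le> card {z\<in>spider_V m h'. graph_square (spider_V m l) (spider_E m l) y z}}
       + card {z\<in>spider_V m h'. graph_square (spider_V m l) (spider_E m l) x z} \<le> k"
proof -
  define A where "A = spider_V m h'"
  define G where "G = graph_square (spider_V m l) (spider_E m l)"
  define d where "d = (\<lambda>x. card {z\<in>A. G x z})"
  define P where "P = {t\<in>{1..m}. 1 \<le> h' t}"
  define Q where "Q = {t\<in>{1..m}. h' t = 0}"
  have fA: "finite A" unfolding A_def by (rule finite_spider_V)
  have fS: "finite S" by (rule card_ge_0_finite) (use cS km in simp)
  have D0: "d (i,j) = 0" if "1 \<le> i" "h' i + 3 \<le> j" for i j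
  proof -
    have "{z\<in>A. G (i,j) z} = {}"
      using nA[of m l i j _ h'] that unfolding A_def G_def by fastforce
    then show ?thesis unfolding d_def by (simp only: card.empty)
  qed
  have D1: "d (i,j) \<le> 1" if "1 \<le> i" "h' i < j" "2 \<le> j" "j \<noteq> h' i + 1" for i j
  proof -
    have "{z\<in>A. G (i,j) z} \<subseteq> {if 3 \<le> j then (i,j-2) else (0,0)}"
      using nA[of m l i j _ h'] that unfolding A_def G_def by fastforce
    then have "d (i,j) \<le> card {if 3 \<le> j then (i,j-2) else (0::nat,0::nat)}"
      unfolding d_def by (intro card_mono) auto
    then show ?thesis by simp
  qed
  have D2: "d (i,j) \<le> 2" if "1 \<le> i" "h' i < j" "2 \<le> j" for i j
  proof -
    have "{z\<in>A. G (i,j) z} \<subseteq> {(i,j-1), if 3 \<le> j then (i,j-2) else (0,0)}"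
      using nA[of m l i j _ h'] that unfolding A_def G_def by fastforce
    then have "d (i,j) \<le> card {(i,j-1), if 3 \<le> j then (i,j-2) else (0::nat,0::nat)}"
      unfolding d_def by (intro card_mono) auto
    also have "\<dots> \<le> 2" by (auto simp: card_insert_if)
    finally show ?thesis .
  qed
  have D3: "d (i,1) \<le> 1 + card P" if "1 \<le> i" "h' i < 1" for i
  proof -
    have "{z\<in>A. G (i,1) z} \<subseteq> insert (0,0) ((\<lambda>t. (t,1)) ` P)"
      using nA[of m l i 1 _ h'] that unfolding A_def G_def P_def by fastforce
    then have "d (i,1) \<le> card (insert (0,0) ((\<lambda>t. (t,1::nat)) ` P))"
      unfolding d_def P_def by (intro card_mono) auto
    also have "\<dots> \<le> 1 + card ((\<lambda>t. (t,1::nat)) ` P)" by (simp add: card_insert_le_m1 card_insert_if)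
    also have "\<dots> \<le> 1 + card P" using card_image_le[of P "\<lambda>t. (t,1::nat)"] P_def by simp
    finally show ?thesis .
  qed
  have PQ: "card P + card Q = m"
  proof -
    have "P \<union> Q = {1..m}" "P \<inter> Q = {}" unfolding P_def Q_def by auto
    moreover have "finite P" "finite Q" unfolding P_def Q_def by auto
    ultimately have "card (P \<union> Q) = card P + card Q" by (intro card_Un_disjoint) auto
    then show ?thesis using \<open>P \<union> Q = {1..m}\<close> by simp
  qed
  have "\<forall>x\<in>S. card {y\<in>S. d x \<le> d y} + d x \<le> k"
  proof
    fix x assume xS: "x \<in> S"
    then obtain i j where x: "x = (i,j)" "1 \<le> i" "i \<le> m" "h' i < j" "j \<le> h i" using memS by blast
    consider "d x = 0" | "d x = 1" | "d x = 2" | "d x \<ge> 3" by linarith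
    then show "card {y\<in>S. d x \<le> d y} + d x \<le> k"
    proof cases
      case 1
      have "card {y\<in>S. d x \<le> d y} \<le> card S" using fS by (intro card_mono) auto
      then show ?thesis using 1 cS by simp
    next
      case 2
      define p where "p = (i0, h' i0 + 3)"
      have pS: "p \<in> S" unfolding p_def using memS i0 by auto
      have dp: "d p = 0" unfolding p_def using D0 i0 by auto
      have "{y\<in>S. d x \<le> d y} \<subseteq> S - {p}" using dp 2 by auto
      then have "card {y\<in>S. d x \<le> d y} \<le> card (S - {p})" using fS by (intro card_mono) auto
      also have "\<dots> = k - 1" using pS fS cS by simp
      finally show ?thesis using 2 km by simp
    next
      case 3
      have "{y\<in>S. d x \<le> d y} \<subseteq> (\<lambda>t. (t, h' t + 1)) ` {1..m}"
      proof
        fix y assume y: "y \<in> {y\<in>S. d x \<le> d y}"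
        then obtain a b where yab: "y = (a,b)" "1 \<le> a" "a \<le> m" "h' a < b" "b \<le> h a" using memS by blast
        have "b = h' a + 1"
        proof (cases "2 \<le> b")
          case True
          show ?thesis using D1[of a b] True yab y 3 by (cases "b = h' a + 1") auto
        next
          case False then show ?thesis using yab by simp
        qed
        then show "y \<in> (\<lambda>t. (t, h' t + 1)) ` {1..m}" using yab by auto
      qed
      then have "card {y\<in>S. d x \<le> d y} \<le> card ((\<lambda>t. (t, h' t + 1)) ` {1..m})" by (intro card_mono) auto
      also have "\<dots> \<le> m" using card_image_le[of "{1..m}" "\<lambda>t. (t, h' t + 1)"] by simp
      finally show ?thesis using 3 km by simp
    next
      case 4
      have j1: "j = 1" using D2[of i j] x 4 by (cases "2 \<le> j") auto
      have dx: "d x \<le> 1 + card P" using D3[of i] x j1 by simp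
      have "{y\<in>S. d x \<le> d y} \<subseteq> (\<lambda>t. (t, 1)) ` Q"
      proof
        fix y assume y: "y \<in> {y\<in>S. d x \<le> d y}"
        then obtain a b where yab: "y = (a,b)" "1 \<le> a" "a \<le> m" "h' a < b" "b \<le> h a" using memS by blast
        have "b = 1" using D2[of a b] yab y 4 by (cases "2 \<le> b") auto
        then show "y \<in> (\<lambda>t. (t, 1)) ` Q" using yab unfolding Q_def by auto
      qed
      then have "card {y\<in>S. d x \<le> d y} \<le> card ((\<lambda>t. (t, 1::nat)) ` Q)" unfolding Q_def by (intro card_mono) auto
      also have "\<dots> \<le> card Q" by (rule card_image_le) (simp add: Q_def)
      finally show ?thesis using dx PQ km by simp
    qed
  qed
  then show ?thesis unfolding d_def A_def G_def .
qed


lemma cond_fb: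
  fixes h :: "nat \<Rightarrow> nat"
  assumes km: "k \<ge> m + 3" and cS: "card S = k"
    and L1: "L1 = (\<lambda>t. (t,1::nat)) ` {t\<in>{1..m}. 1 \<le> h t}"
    and RL: "R \<subseteq> L1"
    and memS: "\<And>x. x \<in> S \<Longrightarrow> x = (0,0) \<or> x \<in> L1 - R \<or> (\<exists>t. x = (t,2) \<and> 1 \<le> t \<and> t \<le> m)"
  shows "\<forall>x\<in>S. card {y\<in>S. card {z\<in>R. graph_square (spider_V m l) (spider_E m l) x z}
          \<le> card {z\<in>R. graph_square (spider_V m l) (spider_E m l) y z}}
       + card {z\<in>R. graph_square (spider_V m l) (spider_E m l) x z} \<le> k"
proof -
  define G where "G = graph_square (spider_V m l) (spider_E m l)"
  define d where "d = (\<lambda>x. card {z\<in>R. G x z})"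
  have fL1: "finite L1" unfolding L1 by auto
  have fR: "finite R" using RL fL1 finite_subset by blast
  have fS: "finite S" by (rule card_ge_0_finite) (use cS km in simp)
  have dR: "d y \<le> card R" for y unfolding d_def using fR by (intro card_mono) auto
  have cL1: "card L1 \<le> m"
  proof -
    have "card L1 \<le> card {t\<in>{1..m}. 1 \<le> h t}" unfolding L1 by (rule card_image_le) auto
    also have "\<dots> \<le> card {1..m}" by (intro card_mono) auto
    finally show ?thesis by simp
  qed
  have cD: "card (L1 - R) = card L1 - card R" using RL fL1 by (simp add: card_Diff_subset finite_subset)
  have cRL: "card R \<le> card L1" using RL fL1 by (rule card_mono[rotated])
  have D2: "{z\<in>R. G (t,2) z} \<subseteq> {(t,1)} \<inter> R" if "1 \<le> t" for t
  proof
    fix z assume z: "z \<in> {z\<in>R. G (t,2) z}"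
    then have "z \<in> L1" using RL by auto
    then obtain a where za: "z = (a,1)" "1 \<le> a" unfolding L1 by auto
    show "z \<in> {(t,1)} \<inter> R" using nbr[of m l t 2 z] that z za unfolding G_def by auto
  qed
  have D2a: "d (t,2) \<le> 1" if "1 \<le> t" for t
  proof -
    have "d (t,2) \<le> card {(t,1::nat)}" unfolding d_def using D2[OF that] by (intro card_mono) auto
    then show ?thesis by simp
  qed
  have D2b: "(t,1) \<in> R" if "1 \<le> t" "1 \<le> d (t,2)" for t
  proof (rule ccontr)
    assume "(t,1) \<notin> R"
    then have "{z\<in>R. G (t,2) z} = {}" using D2[OF that(1)] by auto
    then have "d (t,2) = 0" unfolding d_def by (simp only: card.empty)
    then show False using that by simp
  qed
  have "\<forall>x\<in>S. card {y\<in>S. d x \<le> d y} + d x \<le> k"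
  proof
    fix x assume xS: "x \<in> S"
    consider "d x = 0" | "d x = 1" | "d x \<ge> 2" by linarith
    then show "card {y\<in>S. d x \<le> d y} + d x \<le> k"
    proof cases
      case 1
      have "card {y\<in>S. d x \<le> d y} \<le> card S" using fS by (intro card_mono) auto
      then show ?thesis using 1 cS by simp
    next
      case 2
      have "{y\<in>S. d x \<le> d y} \<subseteq> insert (0,0) (L1 - R) \<union> (\<lambda>z. (fst z, 2)) ` R"
      proof
        fix y assume y: "y \<in> {y\<in>S. d x \<le> d y}"
        show "y \<in> insert (0,0) (L1 - R) \<union> (\<lambda>z. (fst z, 2)) ` R"
        proof (cases "y = (0,0) \<or> y \<in> L1 - R")
          case True then show ?thesis by auto
        next
          case False
          then obtain t where t: "y = (t,2)" "1 \<le> t" using memS y by blast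
          then have "(t,1) \<in> R" using D2b[of t] y 2 by auto
          then show ?thesis using t by force
        qed
      qed
      then have "card {y\<in>S. d x \<le> d y} \<le> card (insert (0,0) (L1 - R) \<union> (\<lambda>z. (fst z, 2::nat)) ` R)"
        using fL1 fR by (intro card_mono) auto
      also have "\<dots> \<le> card (insert (0,0) (L1 - R)) + card ((\<lambda>z. (fst z, 2::nat)) ` R)" by (rule card_Un_le)
      also have "\<dots> \<le> (1 + card (L1 - R)) + card R"
        by (intro add_mono card_image_le fR) (simp add: card_insert_if fL1)
      finally show ?thesis using 2 cD cRL cL1 km by simp
    next
      case 3
      have "{y\<in>S. d x \<le> d y} \<subseteq> insert (0,0) (L1 - R)"
      proof
        fix y assume y: "y \<in> {y\<in>S. d x \<le> d y}"
        show "y \<in> insert (0,0) (L1 - R)"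
        proof (rule ccontr)
          assume "y \<notin> insert (0,0) (L1 - R)"
          then obtain t where t: "y = (t,2)" "1 \<le> t" using memS y by blast
          then show False using D2a[of t] y 3 by auto
        qed
      qed
      then have "card {y\<in>S. d x \<le> d y} \<le> card (insert (0,0) (L1 - R))"
        using fL1 by (intro card_mono) auto
      also have "\<dots> \<le> 1 + card (L1 - R)" by (simp add: card_insert_if fL1)
      finally show ?thesis using dR[of x] cD cRL cL1 km by simp
    qed
  qed
  then show ?thesis unfolding d_def G_def .
qed

lemma remove_k:
  assumes "finite I"
  shows "k' \<le> sum h I \<Longrightarrow> \<exists>h'. (\<forall>i\<in>I. h' i \<le> (h i::nat)) \<and> sum h' I + k' = sum h I"
proof (induction k')
  case 0 then show ?case by (intro exI[of _ h]) auto
next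
  case (Suc k')
  then obtain h' where h1: "\<forall>i\<in>I. h' i \<le> h i" and h2: "sum h' I + k' = sum h I" by auto
  have "sum h' I > 0" using h2 Suc.prems by simp
  then obtain i where i: "i \<in> I" "h' i > 0" using assms by (metis neq0_conv sum.neutral)
  define h'' where "h'' = h'(i := h' i - 1)"
  have "sum h' I = h' i + sum h' (I - {i})" using assms i by (simp add: sum.remove)
  moreover have "sum h'' I = h'' i + sum h'' (I - {i})" using assms i by (simp add: sum.remove)
  moreover have "sum h'' (I - {i}) = sum h' (I - {i})" unfolding h''_def by (intro sum.cong) auto
  ultimately have "sum h'' I + 1 = sum h' I" using i unfolding h''_def by simp
  then show ?case using h1 h2 by (intro exI[of _ h'']) (auto simp: h''_def)
qed

lemma choose_h:
  fixes m i0 k :: nat and h :: "nat \<Rightarrow> nat"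
  assumes i0: "i0 \<in> {1..m}" "3 \<le> h i0" and k3: "3 \<le> k" and kh: "k \<le> (\<Sum>i\<in>{1..m}. h i)"
  shows "\<exists>h'. (\<forall>i\<in>{1..m}. h' i \<le> h i) \<and> (\<Sum>i\<in>{1..m}. h' i) + k = (\<Sum>i\<in>{1..m}. (h i::nat)) \<and> h' i0 + 3 \<le> h i0"
proof (cases "k \<le> h i0")
  case True
  define h' where "h' = h(i0 := h i0 - k)"
  have "(\<Sum>i\<in>{1..m}. h i) = h i0 + (\<Sum>i\<in>{1..m} - {i0}. h i)" by (rule sum.remove) (use i0 in auto)
  moreover have "(\<Sum>i\<in>{1..m}. h' i) = h' i0 + (\<Sum>i\<in>{1..m} - {i0}. h' i)" by (rule sum.remove) (use i0 in auto)
  moreover have "(\<Sum>i\<in>{1..m} - {i0}. h' i) = (\<Sum>i\<in>{1..m} - {i0}. h i)" unfolding h'_def by (intro sum.cong) auto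
  ultimately show ?thesis using True k3 by (intro exI[of _ h']) (auto simp: h'_def)
next
  case False
  have s: "(\<Sum>i\<in>{1..m}. h i) = h i0 + (\<Sum>i\<in>{1..m} - {i0}. h i)" by (rule sum.remove) (use i0 in auto)
  obtain g where g1: "\<forall>i\<in>{1..m} - {i0}. g i \<le> h i"
    and g2: "sum g ({1..m} - {i0}) + (k - h i0) = sum h ({1..m} - {i0})"
  proof -
    have "k - h i0 \<le> sum h ({1..m} - {i0})" using s kh by linarith
    then show ?thesis using remove_k[of "{1..m} - {i0}" "k - h i0" h] that by auto
  qed
  define h' where "h' = g(i0 := 0)"
  have "(\<Sum>i\<in>{1..m}. h' i) = h' i0 + (\<Sum>i\<in>{1..m} - {i0}. h' i)" by (rule sum.remove) (use i0 in auto)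
  moreover have "(\<Sum>i\<in>{1..m} - {i0}. h' i) = (\<Sum>i\<in>{1..m} - {i0}. g i)" unfolding h'_def by (intro sum.cong) auto
  ultimately show ?thesis using False s g1 g2 i0 by (intro exI[of _ h']) (auto simp: h'_def)
qed


lemma main:
  fixes m k :: nat and l :: "nat \<Rightarrow> nat" and L :: "nat \<times> nat \<Rightarrow> 'c set"
  assumes km: "k \<ge> m + 3" and La: "k_assignment (spider_V m l) k L"
  shows "\<forall>h. (\<forall>i\<in>{1..m}. h i \<le> l i) \<longrightarrow> (\<Sum>i\<in>{1..m}. h i) = n \<longrightarrow>
     (\<exists>f. good (graph_square (spider_V m l) (spider_E m l)) L k (spider_V m h) f)"
proof (induction n rule: less_induct)
  case (less n)
  define G where "G = graph_square (spider_V m l) (spider_E m l)"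
  have sym: "\<And>x y. G x y \<Longrightarrow> G y x" unfolding G_def by (rule gsq_sym)
  have irr: "\<And>x. \<not> G x x" unfolding G_def graph_square_def by auto
  have k1: "k \<ge> 1" using km by simp
  show ?case
  proof (intro allI impI)
    fix h assume hl: "\<forall>i\<in>{1..m}. h i \<le> l i" and hn: "(\<Sum>i\<in>{1..m}. h i) = n"
    define W where "W = spider_V m h"
    have WV: "W \<subseteq> spider_V m l" using hl unfolding W_def spider_V_def by force
    have fW: "finite W" unfolding W_def by (rule finite_spider_V)
    have lists: "\<forall>x\<in>W. finite (L x) \<and> card (L x) = k" using La WV unfolding k_assignment_def by auto
    have cW: "card W = Suc n" unfolding W_def card_spider_V hn ..
    have "\<exists>f. good G L k W f"
    proof (cases "card W \<le> k")
      case True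
      then show ?thesis using base[OF fW True k1 lists, of G] sym irr by blast
    next
      case False
      show ?thesis
      proof (cases "\<exists>i0\<in>{1..m}. 3 \<le> h i0")
        case True
        then obtain i0 where i0: "i0 \<in> {1..m}" "3 \<le> h i0" by blast
        have "k \<le> (\<Sum>i\<in>{1..m}. h i)" using False cW hn by simp
        then obtain h' where h'1: "\<forall>i\<in>{1..m}. h' i \<le> h i"
          and h'2: "(\<Sum>i\<in>{1..m}. h' i) + k = (\<Sum>i\<in>{1..m}. h i)" and h'3: "h' i0 + 3 \<le> h i0"
          using choose_h[of i0 m h k] i0 km by auto
        define A where "A = spider_V m h'"
        have AW: "A \<subseteq> W" using h'1 unfolding A_def W_def spider_V_def by force
        have lt: "(\<Sum>i\<in>{1..m}. h' i) < n" using h'2 hn k1 by simp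
        have h'l: "\<forall>i\<in>{1..m}. h' i \<le> l i" using h'1 hl by force
        obtain f where gA: "good G L k A f" using less.IH[OF lt] h'l unfolding A_def G_def by blast
        define S where "S = W - A"
        have WS: "W - S = A" using AW unfolding S_def by auto
        have cA: "card A = Suc (\<Sum>i\<in>{1..m}. h' i)" unfolding A_def card_spider_V ..
        have cS: "card S = k" unfolding S_def using AW fW cW cA h'2 hn
          by (simp add: card_Diff_subset finite_subset)
        have memS: "\<And>x. x \<in> S \<longleftrightarrow> (\<exists>i j. x = (i,j) \<and> 1 \<le> i \<and> i \<le> m \<and> h' i < j \<and> j \<le> h i)"
          unfolding S_def W_def A_def spider_V_def by auto
        have cond: "\<forall>x\<in>S. card {y\<in>S. card {z\<in>W - S. G x z} \<le> card {z\<in>W - S. G y z}} + card {z\<in>W - S. G x z} \<le> k"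
          using cond_main[OF km cS memS i0(1) h'3, of l] unfolding WS A_def G_def .
        show ?thesis
          by (rule step[of W S G L k f]) (use fW S_def WS gA k1 cS lists cond sym irr in auto)
      next
        case False2: False
        have h2: "\<forall>i\<in>{1..m}. h i \<le> 2" using False2 by force
        define L1 where "L1 = (\<lambda>t. (t,1::nat)) ` {t\<in>{1..m}. 1 \<le> h t}"
        have fL1: "finite L1" unfolding L1_def by auto
        have L1W: "L1 \<subseteq> W" unfolding L1_def W_def spider_V_def by auto
        have Wsub: "W \<subseteq> insert (0,0) (L1 \<union> (\<lambda>z. (fst z, 2)) ` L1)"
        proof
          fix x assume "x \<in> W"
          then obtain a b where x: "x = (a,b)" "x = (0,0) \<or> (1 \<le> a \<and> a \<le> m \<and> 1 \<le> b \<and> b \<le> h a)"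
            unfolding W_def spider_V_def by auto
          show "x \<in> insert (0,0) (L1 \<union> (\<lambda>z. (fst z, 2)) ` L1)"
          proof (cases "x = (0,0)")
            case False
            then have ab: "1 \<le> a" "a \<le> m" "1 \<le> b" "b \<le> h a" using x by auto
            then have "b \<le> 2" using h2 by force
            then have "b = 1 \<or> b = 2" using ab by auto
            moreover have "(a,1) \<in> L1" using ab unfolding L1_def by auto
            ultimately show ?thesis using x by force
          qed simp
        qed
        have "card W \<le> card (insert (0,0) (L1 \<union> (\<lambda>z. (fst z, 2::nat)) ` L1))"
          using fL1 by (intro card_mono Wsub) auto
        also have "\<dots> \<le> 1 + card (L1 \<union> (\<lambda>z. (fst z, 2::nat)) ` L1)" by (simp add: card_insert_if fL1)
        also have "\<dots> \<le> 1 + (card L1 + card ((\<lambda>z. (fst z, 2::nat)) ` L1))" using card_Un_le by simp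
        also have "\<dots> \<le> 1 + (card L1 + card L1)" using card_image_le[OF fL1] by simp
        finally have cW2: "card W \<le> 1 + 2 * card L1" by simp
        have cL1: "card L1 \<le> m"
        proof -
          have "card L1 \<le> card {t\<in>{1..m}. 1 \<le> h t}" unfolding L1_def by (rule card_image_le) auto
          also have "\<dots> \<le> card {1..m}" by (intro card_mono) auto
          finally show ?thesis by simp
        qed
        have "card W - k \<le> card L1" using cW2 cL1 km by linarith
        then obtain R where RL: "R \<subseteq> L1" and cR: "card R = card W - k"
          using exists_subset_between[of "{}" "card W - k" L1] fL1 by auto
        have fR: "finite R" using RL fL1 finite_subset by blast
        have RW: "R \<subseteq> W" using RL L1W by auto
        define S where "S = W - R"
        have WS: "W - S = R" using RW unfolding S_def by auto
        have cS: "card S = k" unfolding S_def using RW fW cR False by (simp add: card_Diff_subset fR)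
        obtain f where gR: "good G L k R f"
          using base[OF fR _ k1, of L G] cR cL1 km lists RW sym irr
          by (metis (no_types, lifting) \<open>card W - k \<le> card L1\<close> le_trans subsetD add_leD1)
        have memS: "\<And>x. x \<in> S \<Longrightarrow> x = (0,0) \<or> x \<in> L1 - R \<or> (\<exists>t. x = (t,2) \<and> 1 \<le> t \<and> t \<le> m)"
        proof -
          fix x assume "x \<in> S"
          then have xW: "x \<in> W" and xR: "x \<notin> R" unfolding S_def by auto
          show "x = (0,0) \<or> x \<in> L1 - R \<or> (\<exists>t. x = (t,2) \<and> 1 \<le> t \<and> t \<le> m)"
          proof (cases "x = (0,0)")
            case False
            then obtain a b where ab: "x = (a,b)" "1 \<le> a" "a \<le> m" "1 \<le> b" "b \<le> h a"
              using xW unfolding W_def spider_V_def by auto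
            then have "b \<le> 2" using h2 by force
            then have "b = 1 \<or> b = 2" using ab by auto
            then show ?thesis
            proof
              assume "b = 1" then have "x \<in> L1" using ab unfolding L1_def by auto
              then show ?thesis using xR by auto
            qed (use ab in auto)
          qed simp
        qed
        have cond: "\<forall>x\<in>S. card {y\<in>S. card {z\<in>W - S. G x z} \<le> card {z\<in>W - S. G y z}} + card {z\<in>W - S. G x z} \<le> k"
          using cond_fb[OF km cS L1_def RL memS, of l] unfolding WS G_def .
        show ?thesis
          by (rule step[of W S G L k f]) (use fW S_def WS gR k1 cS lists cond sym irr in auto)
      qed
    qed
    then show "\<exists>f. good (graph_square (spider_V m l) (spider_E m l)) L k (spider_V m h) f"
      unfolding G_def W_def .
  qed
qed

theorem lemma2p3:
  fixes m k :: nat and l :: "nat \<Rightarrow> nat"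
  assumes "m \<ge> 3"
    and "\<forall>i. 1 \<le> i \<and> i \<le> m \<longrightarrow> l i \<ge> 1"
    and "\<forall>i j. 1 \<le> i \<and> i \<le> j \<and> j \<le> m \<longrightarrow> l i \<le> l j"
    and "k \<ge> m + 3"
  shows "equitably_choosable (spider_V m l) (graph_square (spider_V m l) (spider_E m l)) k
           TYPE('c)"
  unfolding equitably_choosable_def
proof (intro allI impI)
  fix L :: "nat \<times> nat \<Rightarrow> 'c set"
  assume La: "k_assignment (spider_V m l) k L"
  obtain f where g: "good (graph_square (spider_V m l) (spider_E m l)) L k (spider_V m l) f"
    using main[OF assms(4) La, of "\<Sum>i\<in>{1..m}. l i"] by blast
  have kp: "k > 0" using assms(4) by simp
  have "\<forall>c. real (card {v\<in>spider_V m l. f v = c}) \<le> of_int \<lceil>real (card (spider_V m l)) / real k\<rceil>"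
  proof
    fix c
    define N where "N = card (spider_V m l)"
    define q where "q = card {v\<in>spider_V m l. f v = c}"
    have "q * k < N + k" using g unfolding good_def q_def N_def by blast
    then have "real q * real k < real N + real k" by (metis of_nat_add of_nat_less_iff of_nat_mult)
    then have "(real q - 1) * real k < real N" by (simp add: algebra_simps)
    then have "real q - 1 < real N / real k" using kp by (simp add: pos_less_divide_eq)
    then have "int q \<le> \<lceil>real N / real k\<rceil>" by (simp add: le_ceiling_iff)
    then show "real (card {v\<in>spider_V m l. f v = c}) \<le> of_int \<lceil>real (card (spider_V m l)) / real k\<rceil>"
      unfolding q_def N_def by linarith
  qed
  then show "\<exists>f. equitable_L_coloring (spider_V m l) (graph_square (spider_V m l) (spider_E m l)) k L f"
    using g unfolding good_def equitable_L_coloring_def by blast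
qed

end
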